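(* Let $n\geq2$ and let $\mathcal{C}\to\mathbb{P}^{n-1}$ be a genus one normal curve of degree $n$ over $\mathbb{C}$ (a double cover of $\mathbb{P}^1$ if $n=2$) with Jacobian $E$. For each $T\in E[n](\mathbb{C})$ let $M_T\in GL_n(\mathbb{C})$ be any matrix describing the action of $T$ on $\mathcal{C}\to\mathbb{P}^{n-1}$. Then, up to a positive real scalar, the reduction covariant of $\mathcal{C}$ is $$\varphi_{\mathbb{C}}(\mathcal{C})=\sum_{T\in E[n](\mathbb{C})}\frac{1}{|\det M_T|^{2/n}}\,\overline{M}_T^{\,t}M_T.$$
   Context: $E[n]$ acts on $\mathcal{C}$ by translation (as $\mathcal{C}$ is a torsor under $E$), and this action extends to an action on $\mathbb{P}^{n-1}$ by projective linear transformations, giving a homomorphism $\chi:E[n](\mathbb{C})\to PGL_n(\mathbb{C})$; $M_T$ is any lift of $\chi(T)$ to $GL_n(\mathbb{C})$. The Heisenberg group $H_n$ is the preimage of $\chi(E[n](\mathbb{C}))$ in $SL_n(\mathbb{C})$. The reduction covariant $\varphi_{\mathbb{C}}(\mathcal{C})$ is the positive definite Hermitian $n\times n$ matrix $M$, unique up to positive real scalars, such that $\bar h^{-t}Mh^{-1}=M$ for all $h\in H_n$ (the matrix of the $H_n$-invariant inner product). *)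

theory Defs
  imports "HOL-Algebra.Group" "Jordan_Normal_Form.Schur_Decomposition"
begin

definition proj_eq :: "complex mat \<Rightarrow> complex mat \<Rightarrow> bool" where
  "proj_eq A B \<longleftrightarrow> (\<exists>c::complex. c \<noteq> 0 \<and> A = c \<cdot>\<^sub>m B)"

definition GL :: "nat \<Rightarrow> complex mat set" where
  "GL n = {A. A \<in> carrier_mat n n \<and> det A \<noteq> 0}"

definition SL :: "nat \<Rightarrow> complex mat set" where
  "SL n = {A. A \<in> carrier_mat n n \<and> det A = 1}"

text \<open>M : G -> GL_n is a family of lifts of a homomorphism chi : G -> PGL_n.\<close>
definition proj_lift_of_hom :: "('g, 'b) monoid_scheme \<Rightarrow> nat \<Rightarrow> ('g \<Rightarrow> complex mat) \<Rightarrow> bool" where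
  "proj_lift_of_hom G n M \<longleftrightarrow>
     (\<forall>T \<in> carrier G. M T \<in> GL n) \<and>
     (\<forall>T \<in> carrier G. \<forall>U \<in> carrier G. proj_eq (M (T \<otimes>\<^bsub>G\<^esub> U)) (M T * M U))"

definition heisenberg :: "('g, 'b) monoid_scheme \<Rightarrow> nat \<Rightarrow> ('g \<Rightarrow> complex mat) \<Rightarrow> complex mat set" where
  "heisenberg G n M = {h \<in> SL n. \<exists>T \<in> carrier G. proj_eq h (M T)}"

definition pos_def_hermitian :: "nat \<Rightarrow> complex mat \<Rightarrow> bool" where
  "pos_def_hermitian n A \<longleftrightarrow> A \<in> carrier_mat n n \<and> mat_adjoint A = A \<and>
     (\<forall>v \<in> carrier_vec n. v \<noteq> 0\<^sub>v n \<longrightarrow> Re (conjugate v \<bullet> (A *\<^sub>v v)) > 0)"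

definition invariant_under :: "nat \<Rightarrow> complex mat set \<Rightarrow> complex mat \<Rightarrow> bool" where
  "invariant_under n H A \<longleftrightarrow>
     (\<forall>h \<in> H. \<forall>g \<in> carrier_mat n n. h * g = 1\<^sub>m n \<longrightarrow> mat_adjoint g * A * g = A)"

definition is_reduction_covariant :: "('g, 'b) monoid_scheme \<Rightarrow> nat \<Rightarrow> ('g \<Rightarrow> complex mat) \<Rightarrow> complex mat \<Rightarrow> bool" where
  "is_reduction_covariant G n M A \<longleftrightarrow>
     pos_def_hermitian n A \<and> invariant_under n (heisenberg G n M) A"

definition mat_sum :: "nat \<Rightarrow> ('g \<Rightarrow> complex mat) \<Rightarrow> 'g set \<Rightarrow> complex mat" where
  "mat_sum n f S = mat n n (\<lambda>(i,j). \<Sum>T\<in>S. f T $$ (i,j))"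

end

theory Submission
  imports Defs
begin


lemma adj_dims[simp]: "dim_row (mat_adjoint A) = dim_col A" "dim_col (mat_adjoint A) = dim_row A"
  unfolding mat_adjoint_def by auto

lemma adj_carrier[simp]: "A \<in> carrier_mat n m \<Longrightarrow> mat_adjoint A \<in> carrier_mat m n"
  unfolding carrier_mat_def by simp

lemma adj_index[simp]: "i < dim_col A \<Longrightarrow> j < dim_row A \<Longrightarrow> mat_adjoint (A::complex mat) $$ (i,j) = cnj (A $$ (j,i))"
  unfolding mat_adjoint_def by (simp add: mat_of_rows_index)

lemma adj_adj[simp]: "mat_adjoint (mat_adjoint (A::complex mat)) = A"
  by (rule eq_matI) auto

lemma adj_mult: assumes "A \<in> carrier_mat n m" "B \<in> carrier_mat m k"
  shows "mat_adjoint ((A::complex mat) * B) = mat_adjoint B * mat_adjoint A"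
  using assms by (intro eq_matI) (auto simp: scalar_prod_def cnj_sum mult.commute)

lemma adj_smult: "mat_adjoint (c \<cdot>\<^sub>m (A::complex mat)) = cnj c \<cdot>\<^sub>m mat_adjoint A"
  by (intro eq_matI) auto

lemma adj_one[simp]: "mat_adjoint (1\<^sub>m n :: complex mat) = 1\<^sub>m n"
  by (intro eq_matI) auto

lemma adj_vec: assumes "A \<in> carrier_mat n n" "v \<in> carrier_vec n" "w \<in> carrier_vec n"
  shows "conjugate v \<bullet> (mat_adjoint (A::complex mat) *\<^sub>v w) = conjugate (A *\<^sub>v v) \<bullet> w"
proof -
  have "conjugate v \<bullet> (mat_adjoint A *\<^sub>v w) = (\<Sum>i<n. cnj (v$i) * (\<Sum>j<n. cnj (A$$(j,i)) * w$j))"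
    using assms by (simp add: scalar_prod_def lessThan_atLeast0 row_def)
  also have "\<dots> = (\<Sum>j<n. cnj (\<Sum>i<n. A$$(j,i) * v$i) * w$j)"
    apply (simp add: sum_distrib_left sum_distrib_right cnj_sum)
    apply (subst sum.swap)
    apply (simp add: mult_ac)
    done
  also have "\<dots> = conjugate (A *\<^sub>v v) \<bullet> w"
    using assms by (simp add: scalar_prod_def lessThan_atLeast0 row_def)
  finally show ?thesis .
qed

lemma ms_carrier[simp]: "mat_sum n f S \<in> carrier_mat n n"
  unfolding mat_sum_def by auto
lemma ms_dims[simp]: "dim_row (mat_sum n f S) = n" "dim_col (mat_sum n f S) = n"
  unfolding mat_sum_def by auto
lemma ms_index[simp]: "i < n \<Longrightarrow> j < n \<Longrightarrow> mat_sum n f S $$ (i,j) = (\<Sum>T\<in>S. f T $$ (i,j))"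
  unfolding mat_sum_def by auto

lemma ms_cong: "(\<And>T. T \<in> S \<Longrightarrow> f T = g T) \<Longrightarrow> mat_sum n f S = mat_sum n g S"
  unfolding mat_sum_def by (intro eq_matI) auto

lemma ms_reindex: assumes "bij_betw p S S"
  shows "mat_sum n (\<lambda>T. f (p T)) S = mat_sum n f S"
proof (intro eq_matI)
  fix i j assume "i < dim_row (mat_sum n f S)" "j < dim_col (mat_sum n f S)"
  then show "mat_sum n (\<lambda>T. f (p T)) S $$ (i, j) = mat_sum n f S $$ (i, j)"
    using sum.reindex_bij_betw[OF assms, of "\<lambda>T. f T $$ (i,j)"] by simp
qed auto

lemma ms_left: assumes A: "A \<in> carrier_mat n n" and f: "\<And>T. T \<in> S \<Longrightarrow> f T \<in> carrier_mat n n"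
  shows "A * mat_sum n f S = mat_sum n (\<lambda>T. A * f T) (S::'g set)"
proof (intro eq_matI)
  fix i j assume ij: "i < dim_row (mat_sum n (\<lambda>T. A * f T) S)" "j < dim_col (mat_sum n (\<lambda>T. A * f T) S)"
  then have i: "i < n" and j: "j < n" by auto
  have "(A * mat_sum n f S) $$ (i,j) = (\<Sum>k<n. A $$ (i,k) * (\<Sum>T\<in>S. f T $$ (k,j)))"
    using A i j by (simp add: scalar_prod_def lessThan_atLeast0)
  also have "\<dots> = (\<Sum>T\<in>S. \<Sum>k<n. A $$ (i,k) * f T $$ (k,j))"
    by (simp add: sum_distrib_left) (rule sum.swap)
  also have "\<dots> = mat_sum n (\<lambda>T. A * f T) S $$ (i,j)"
    using A i j apply simp apply (rule sum.cong[OF refl])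
    subgoal for T using f[of T] A by (auto simp: scalar_prod_def lessThan_atLeast0 intro!: sum.cong)
    done
  finally show "(A * mat_sum n f S) $$ (i,j) = mat_sum n (\<lambda>T. A * f T) S $$ (i,j)" .
qed (use A in auto)

lemma ms_right: assumes A: "A \<in> carrier_mat n n" and f: "\<And>T. T \<in> S \<Longrightarrow> f T \<in> carrier_mat n n"
  shows "mat_sum n f S * A = mat_sum n (\<lambda>T. f T * A) (S::'g set)"
proof (intro eq_matI)
  fix i j assume ij: "i < dim_row (mat_sum n (\<lambda>T. f T * A) S)" "j < dim_col (mat_sum n (\<lambda>T. f T * A) S)"
  then have i: "i < n" and j: "j < n" by auto
  have "(mat_sum n f S * A) $$ (i,j) = (\<Sum>k<n. (\<Sum>T\<in>S. f T $$ (i,k)) * A $$ (k,j))"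
    using A i j by (simp add: scalar_prod_def lessThan_atLeast0)
  also have "\<dots> = (\<Sum>T\<in>S. \<Sum>k<n. f T $$ (i,k) * A $$ (k,j))"
    by (simp add: sum_distrib_right) (rule sum.swap)
  also have "\<dots> = mat_sum n (\<lambda>T. f T * A) S $$ (i,j)"
    using A i j apply simp apply (rule sum.cong[OF refl])
    subgoal for T using f[of T] A by (auto simp: scalar_prod_def lessThan_atLeast0 intro!: sum.cong)
    done
  finally show "(mat_sum n f S * A) $$ (i,j) = mat_sum n (\<lambda>T. f T * A) S $$ (i,j)" .
qed (use A in auto)

lemma ms_adj: assumes f: "\<And>T. T \<in> S \<Longrightarrow> f T \<in> carrier_mat n n"
  shows "mat_adjoint (mat_sum n f S) = mat_sum n (\<lambda>T. mat_adjoint (f T)) S"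
  apply (intro eq_matI)
  apply (auto simp: intro!: sum.cong)
  subgoal for i j T using f[of T] by auto
  done

lemma ms_quad: assumes v: "v \<in> carrier_vec n" and f: "\<And>T. T \<in> S \<Longrightarrow> f T \<in> carrier_mat n n"
  and S: "finite S"
  shows "conjugate v \<bullet> (mat_sum n f S *\<^sub>v v) = (\<Sum>T\<in>S. conjugate v \<bullet> (f T *\<^sub>v v))"
proof -
  have "conjugate v \<bullet> (mat_sum n f S *\<^sub>v v) = (\<Sum>i<n. cnj (v$i) * (\<Sum>j<n. (\<Sum>T\<in>S. f T $$ (i,j)) * v$j))"
    using v by (simp add: scalar_prod_def lessThan_atLeast0 row_def)
  also have "\<dots> = (\<Sum>i<n. \<Sum>T\<in>S. cnj (v$i) * (\<Sum>j<n. f T $$ (i,j) * v$j))"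
    apply (simp add: sum_distrib_left sum_distrib_right)
    apply (intro sum.cong refl)
    apply (subst sum.swap) apply (simp add: mult_ac)
    done
  also have "\<dots> = (\<Sum>T\<in>S. \<Sum>i<n. cnj (v$i) * (\<Sum>j<n. f T $$ (i,j) * v$j))"
    by (rule sum.swap)
  also have "\<dots> = (\<Sum>T\<in>S. conjugate v \<bullet> (f T *\<^sub>v v))"
    apply (rule sum.cong[OF refl])
    subgoal for T using f[of T] v by (auto simp: scalar_prod_def lessThan_atLeast0 row_def intro!: sum.cong)
    done
  finally show ?thesis .
qed

lemma smult_mat_vec: "A \<in> carrier_mat n m \<Longrightarrow> v \<in> carrier_vec m \<Longrightarrow> (k \<cdot>\<^sub>m A) *\<^sub>v v = k \<cdot>\<^sub>v (A *\<^sub>v (v::complex vec))"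
  by (intro eq_vecI) (auto simp: scalar_prod_def sum_distrib_left mult_ac)




lemma pow_powr_aux: assumes "x > 0" "(n::nat) > 0"
  shows "(x^n) powr (2 / real n) = (x::real)^2"
proof -
  have "x^n = x powr (real n)" using powr_realpow[of x n] assms by simp
  then have "(x^n) powr (2/real n) = x powr (real n * (2 / real n))" by (simp only: powr_powr)
  also have "real n * (2/real n) = 2" using assms by simp
  also have "x powr 2 = x^2" using assms powr_numeral[of x "num.Bit0 num.One"] by simp
  finally show ?thesis .
qed

lemma powr_aux: assumes "x > 0" "y > 0" "z > 0" "(n::nat) > 0"
  shows "(x^n * y * z) powr (2 / real n) = x^2 * y powr (2/real n) * z powr (2/real n)"
  using pow_powr_aux[OF assms(1,4)] by (simp only: powr_mult)

lemma powr_aux2: assumes "x > 0" "x^n * y = 1" "(n::nat) > 0"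
  shows "y powr (2 / real n) = 1 / x^2"
proof -
  have y: "y = 1 / x^n" using assms by (simp add: field_simps)
  have "y powr (2 / real n) = 1 / (x^n) powr (2 / real n)"
    unfolding y by (simp only: powr_divide powr_one_eq_one)
  then show ?thesis using pow_powr_aux[OF assms(1,3)] by simp
qed

lemma smult_smult_m: "a \<cdot>\<^sub>m (b \<cdot>\<^sub>m (A::complex mat)) = (a * b) \<cdot>\<^sub>m A"
  by (intro eq_matI) auto

lemma adj_quad_smult: assumes "B \<in> carrier_mat n n"
  shows "mat_adjoint (d \<cdot>\<^sub>m B) * (d \<cdot>\<^sub>m (B::complex mat)) = (cnj d * d) \<cdot>\<^sub>m (mat_adjoint B * B)"
proof -
  have "mat_adjoint (d \<cdot>\<^sub>m B) * (d \<cdot>\<^sub>m B) = d \<cdot>\<^sub>m (cnj d \<cdot>\<^sub>m (mat_adjoint B * B))"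
    using assms by (simp add: adj_smult mult_smult_distrib[of _ n n] mult_smult_assoc_mat[of _ n n])
  then show ?thesis by (simp add: smult_smult_m mult.commute)
qed



lemma smult_one_m[simp]: "1 \<cdot>\<^sub>m (A::complex mat) = A"
  by (intro eq_matI) auto

lemma sandwich: fixes A :: "complex mat" assumes "A \<in> carrier_mat n n" "B \<in> carrier_mat n n" "C \<in> carrier_mat n n" "H \<in> carrier_mat n n"
  shows "A * (k \<cdot>\<^sub>m (B * C)) * H = k \<cdot>\<^sub>m (A * (B * (C * H)))"
proof -
  have "A * (k \<cdot>\<^sub>m (B * C)) = k \<cdot>\<^sub>m (A * (B * C))"
    using assms by (intro mult_smult_distrib[of A n n "B*C" n]) auto
  moreover have "(k \<cdot>\<^sub>m (A * (B * C))) * H = k \<cdot>\<^sub>m (A * (B * C) * H)"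
    using assms by (intro mult_smult_assoc_mat[of _ n n H n]) auto
  moreover have "A * (B * C) * H = A * (B * (C * H))"
    using assms by (simp add: assoc_mult_mat[of _ n n _ n _ n])
  ultimately show ?thesis by simp
qed

lemma assoc5: fixes a :: "complex mat"
  assumes "a \<in> carrier_mat n n" "b \<in> carrier_mat n n" "S \<in> carrier_mat n n" "h \<in> carrier_mat n n" "g \<in> carrier_mat n n"
  shows "a * (b * S * h) * g = (a * b) * S * (h * g)"
proof -
  have "a * (b * S * h) * g = a * (b * (S * (h * g)))"
    using assms by (simp add: assoc_mult_mat[of _ n n _ n _ n])
  also have "\<dots> = (a * b) * S * (h * g)"
    using assms by (simp add: assoc_mult_mat[of _ n n _ n _ n])
  finally show ?thesis .
qed

theorem corollary6p3:
  fixes G :: "('g, 'b) monoid_scheme" and n :: nat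
    and M :: "'g \<Rightarrow> complex mat" and \<Phi> :: "complex mat"
  assumes "n \<ge> 2"
    and "comm_group G" and "finite (carrier G)" and "card (carrier G) = n ^ 2"
    and "proj_lift_of_hom G n M"
    and unique: "\<And>A B. is_reduction_covariant G n M A \<Longrightarrow> is_reduction_covariant G n M B \<Longrightarrow>
                   \<exists>c::real. c > 0 \<and> A = complex_of_real c \<cdot>\<^sub>m B"
    and "is_reduction_covariant G n M \<Phi>"
  shows "\<exists>c::real. c > 0 \<and>
    \<Phi> = complex_of_real c \<cdot>\<^sub>m
      mat_sum n (\<lambda>T. complex_of_real (1 / (cmod (det (M T)) powr (2 / real n)))
                       \<cdot>\<^sub>m (mat_adjoint (M T) * M T)) (carrier G)"
proof -
  note n2 = assms(1) and fin = assms(3) and lift = assms(5)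
  have n0: "n > 0" using n2 by simp
  interpret group G using assms(2) comm_group.axioms(2) comm_group_def by blast
  define w where "w T = 1 / (cmod (det (M T)) powr (2 / real n))" for T
  define F where "F = (\<lambda>T. complex_of_real (w T) \<cdot>\<^sub>m (mat_adjoint (M T) * M T))"
  define S where "S = mat_sum n F (carrier G)"
  have MT: "M T \<in> carrier_mat n n" "det (M T) \<noteq> 0" if "T \<in> carrier G" for T
    using lift that unfolding proj_lift_of_hom_def GL_def by auto
  have wpos: "w T > 0" if "T \<in> carrier G" for T
    using MT[OF that] unfolding w_def by simp
  have Fc: "F T \<in> carrier_mat n n" if "T \<in> carrier G" for T
    using MT[OF that] unfolding F_def by (intro smult_carrier_mat mult_carrier_mat[of _ n n] adj_carrier) simp_all
  have Fadj: "mat_adjoint (F T) = F T" if "T \<in> carrier G" for T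
    using MT[OF that] unfolding F_def
    by (simp add: adj_smult adj_mult[of _ n n _ n])
  have Fquad: "Re (conjugate v \<bullet> (F T *\<^sub>v v)) > 0"
    if T: "T \<in> carrier G" and v: "v \<in> carrier_vec n" "v \<noteq> 0\<^sub>v n" for T v
  proof -
    let ?u = "M T *\<^sub>v v"
    have u: "?u \<in> carrier_vec n" using MT[OF T] v by simp
    have u0: "?u \<noteq> 0\<^sub>v n" using MT[OF T] v det_0_iff_vec_prod_zero[OF MT(1)[OF T]] by auto
    have "F T *\<^sub>v v = complex_of_real (w T) \<cdot>\<^sub>v (mat_adjoint (M T) *\<^sub>v ?u)"
      unfolding F_def using MT[OF T] v
      by (subst smult_mat_vec[of _ n n]) (auto simp: assoc_mult_mat_vec[of _ n n _ n])
    then have "conjugate v \<bullet> (F T *\<^sub>v v) = complex_of_real (w T) * (conjugate v \<bullet> (mat_adjoint (M T) *\<^sub>v ?u))"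
      using MT[OF T] v by simp
    also have "\<dots> = complex_of_real (w T) * (conjugate ?u \<bullet> ?u)"
      using adj_vec[OF MT(1)[OF T] v(1) u] by simp
    also have "conjugate ?u \<bullet> ?u = ?u \<bullet>c ?u"
      using conjugate_vec_sprod_comm[OF u u] by simp
    finally have eq: "conjugate v \<bullet> (F T *\<^sub>v v) = complex_of_real (w T) * (?u \<bullet>c ?u)" .
    have "?u \<bullet>c ?u > 0" using u u0 by simp
    then have "Re (?u \<bullet>c ?u) > 0" by (simp add: less_complex_def)
    then show ?thesis using eq wpos[OF T] by simp
  qed
  have ne: "carrier G \<noteq> {}" by auto
  have pd: "pos_def_hermitian n S"
    unfolding pos_def_hermitian_def
  proof (intro conjI ballI impI)
    show "S \<in> carrier_mat n n" unfolding S_def by simp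
    show "mat_adjoint S = S" unfolding S_def
      by (subst ms_adj) (auto intro!: ms_cong simp: Fc Fadj)
    fix v :: "complex vec" assume v: "v \<in> carrier_vec n" "v \<noteq> 0\<^sub>v n"
    have "Re (conjugate v \<bullet> (S *\<^sub>v v)) = (\<Sum>T\<in>carrier G. Re (conjugate v \<bullet> (F T *\<^sub>v v)))"
      unfolding S_def by (subst ms_quad[OF v(1) Fc fin]) auto
    also have "\<dots> > 0" using Fquad[OF _ v] fin ne by (intro sum_pos) auto
    finally show "Re (conjugate v \<bullet> (S *\<^sub>v v)) > 0" .
  qed
  have inv: "invariant_under n (heisenberg G n M) S"
    unfolding invariant_under_def
  proof (intro ballI allI impI)
    fix h g assume h: "h \<in> heisenberg G n M" and g: "g \<in> carrier_mat n n" and hg: "h * g = 1\<^sub>m n"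
    from h obtain U c where U: "U \<in> carrier G" and c: "c \<noteq> 0" and hdef: "h = c \<cdot>\<^sub>m M U"
      and hc: "h \<in> carrier_mat n n" and dh: "det h = 1"
      unfolding heisenberg_def SL_def proj_eq_def by auto
    have key: "mat_adjoint h * F T * h = F (T \<otimes>\<^bsub>G\<^esub> U)" if T: "T \<in> carrier G" for T
    proof -
      have TU: "T \<otimes>\<^bsub>G\<^esub> U \<in> carrier G" using T U by simp
      obtain e where e: "e \<noteq> 0" and Me: "M (T \<otimes>\<^bsub>G\<^esub> U) = e \<cdot>\<^sub>m (M T * M U)"
        using lift T U unfolding proj_lift_of_hom_def proj_eq_def by blast
      note MTc = MT[OF T] and MUc = MT[OF U] and MTUc = MT[OF TU]
      have P: "M T * M U = (1/e) \<cdot>\<^sub>m M (T \<otimes>\<^bsub>G\<^esub> U)"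
        using Me e by (simp add: smult_smult_m)
      have Th: "M T * h = (c/e) \<cdot>\<^sub>m M (T \<otimes>\<^bsub>G\<^esub> U)"
        unfolding hdef using MTc MUc P
        by (simp add: mult_smult_distrib[of _ n n] smult_smult_m)
      have "mat_adjoint h * F T * h = complex_of_real (w T) \<cdot>\<^sub>m (mat_adjoint (M T * h) * (M T * h))"
        unfolding F_def using MTc hc
        by (simp add: adj_mult[of _ n n _ n] sandwich[of _ n] assoc_mult_mat[of "mat_adjoint h" n n "mat_adjoint (M T)" n "M T * h" n])
      also have "\<dots> = complex_of_real (w T) \<cdot>\<^sub>m ((cnj (c/e) * (c/e)) \<cdot>\<^sub>m (mat_adjoint (M (T \<otimes>\<^bsub>G\<^esub> U)) * M (T \<otimes>\<^bsub>G\<^esub> U)))"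
        unfolding Th using adj_quad_smult[OF MTUc(1)] by simp
      also have "\<dots> = complex_of_real (w T * cmod (c/e) ^ 2) \<cdot>\<^sub>m (mat_adjoint (M (T \<otimes>\<^bsub>G\<^esub> U)) * M (T \<otimes>\<^bsub>G\<^esub> U))"
      proof -
        have "cnj (c/e) * (c/e) = complex_of_real (cmod (c/e) ^ 2)"
          by (metis complex_norm_square mult.commute of_real_power)
        then show ?thesis by (simp only: smult_smult_m of_real_mult)
      qed
      also have "w T * cmod (c/e) ^ 2 = w (T \<otimes>\<^bsub>G\<^esub> U)"
      proof -
        have d1: "det (M (T \<otimes>\<^bsub>G\<^esub> U)) = e ^ n * (det (M T) * det (M U))"
          using Me MTc MUc by (simp add: det_mult[of _ n])
        have d2: "c ^ n * det (M U) = 1" using dh hdef MUc by simp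
        have a1: "cmod (det (M (T \<otimes>\<^bsub>G\<^esub> U))) = cmod e ^ n * cmod (det (M T)) * cmod (det (M U))"
          using d1 by (simp add: norm_mult norm_power)
        have a2: "cmod c ^ n * cmod (det (M U)) = 1"
          using arg_cong[OF d2, of cmod] by (simp add: norm_mult norm_power)
        have p1: "cmod (det (M (T \<otimes>\<^bsub>G\<^esub> U))) powr (2 / real n) =
            cmod e ^ 2 * cmod (det (M T)) powr (2 / real n) * cmod (det (M U)) powr (2 / real n)"
          unfolding a1 using e MTc MUc n0 by (intro powr_aux) auto
        have p2: "cmod (det (M U)) powr (2 / real n) = 1 / cmod c ^ 2"
          using powr_aux2[OF _ a2 n0] c by simp
        show ?thesis unfolding w_def p1 p2 using e c MTc
          by (simp add: norm_divide power_divide field_simps)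
      qed
      finally show ?thesis unfolding F_def by simp
    qed
    have bij: "bij_betw (\<lambda>T. T \<otimes>\<^bsub>G\<^esub> U) (carrier G) (carrier G)"
      by (rule bij_betw_byWitness[where f' = "\<lambda>x. x \<otimes>\<^bsub>G\<^esub> inv\<^bsub>G\<^esub> U"])
         (use U in \<open>auto simp: m_assoc\<close>)
    have hS: "mat_adjoint h * S * h = S"
    proof -
      have "mat_adjoint h * S * h = mat_sum n (\<lambda>T. mat_adjoint h * F T * h) (carrier G)"
      proof -
        have ah: "mat_adjoint h \<in> carrier_mat n n" using hc by simp
        have "mat_adjoint h * S = mat_sum n (\<lambda>T. mat_adjoint h * F T) (carrier G)"
          unfolding S_def by (rule ms_left[OF ah Fc])
        moreover have "mat_sum n (\<lambda>T. mat_adjoint h * F T) (carrier G) * h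
            = mat_sum n (\<lambda>T. mat_adjoint h * F T * h) (carrier G)"
          by (rule ms_right[OF hc]) (use ah Fc in \<open>auto intro!: mult_carrier_mat[of _ n n]\<close>)
        ultimately show ?thesis by simp
      qed
      also have "\<dots> = mat_sum n (\<lambda>T. F (T \<otimes>\<^bsub>G\<^esub> U)) (carrier G)"
        by (rule ms_cong) (rule key)
      also have "\<dots> = S" unfolding S_def by (rule ms_reindex[OF bij])
      finally show ?thesis .
    qed
    have Sc: "S \<in> carrier_mat n n" unfolding S_def by simp
    have "mat_adjoint g * S * g = mat_adjoint g * (mat_adjoint h * S * h) * g" using hS by simp
    also have "\<dots> = (mat_adjoint g * mat_adjoint h) * S * (h * g)"
      using g hc Sc by (intro assoc5[of _ n]) auto
    also have "\<dots> = mat_adjoint (h * g) * S * (h * g)"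
      using g hc by (simp add: adj_mult[of _ n n _ n])
    also have "\<dots> = S" using hg Sc by simp
    finally show "mat_adjoint g * S * g = S" .
  qed
  have "is_reduction_covariant G n M S"
    unfolding is_reduction_covariant_def using pd inv by simp
  from unique[OF assms(7) this] obtain c where "c > 0" "\<Phi> = complex_of_real c \<cdot>\<^sub>m S" by blast
  then show ?thesis unfolding S_def F_def w_def by blast
qed

end
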